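(* Assume the payoffs are normalized so that $T=1$, $S=0$ (hence $1>R>\tfrac12$ and $R>P>0$), and let $\bar\alpha>0$. Put $\bar\beta=-\bar\alpha-R^{-1}$. Among all memory-one strategies $\mathbf p\in[0,1]^4$ whose X Press-Dyson vector has the form $\mathbf p-(1,1,0,0)=\gamma(\bar\alpha\mathbf S_X+\bar\beta\mathbf S_Y+\mathbf 1)$ with $\gamma>0$, the one with the largest $\gamma$ (the associated agreeable zero-determinant top strategy) is $$\mathbf p=\Big(1,\ \frac{2R-1}{R(\bar\alpha+1)},\ 1,\ \frac{R-P}{R(\bar\alpha+1)}\Big).$$
   Context: Iterated Prisoner's Dilemma with normalized payoffs $T=1>R>P>S=0$ and $2R>1$; outcomes ordered $cc,cd,dc,dd$ (first letter X's play, second Y's); payoff vectors $\mathbf S_X=(R,0,1,P)$, $\mathbf S_Y=(R,1,0,P)$, $\mathbf 1=(1,1,1,1)$. A memory-one strategy for X is $\mathbf p=(p_1,\dots,p_4)\in[0,1]^4$, $p_i$ being the probability X plays $c$ after outcome $i$ of the previous round; its X Press-Dyson vector is $\tilde{\mathbf p}=\mathbf p-(1,1,0,0)$. *)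

theory Defs
  imports "HOL-Analysis.Analysis"
begin

text \<open>Outcomes ordered cc, cd, dc, dd; vectors in real^4 with components 1..4.\<close>

definition SX :: "real \<Rightarrow> real \<Rightarrow> real^4" where
  "SX R P = vector [R, 0, 1, P]"

definition SY :: "real \<Rightarrow> real \<Rightarrow> real^4" where
  "SY R P = vector [R, 1, 0, P]"

definition one4 :: "real^4" where
  "one4 = vector [1, 1, 1, 1]"

definition memory_one :: "real^4 \<Rightarrow> bool" where
  "memory_one p \<longleftrightarrow> (\<forall>i. 0 \<le> p $ i \<and> p $ i \<le> 1)"

definition PD_X :: "real^4 \<Rightarrow> real^4" where
  "PD_X p = p - vector [1, 1, 0, 0]"

end

theory Submission
  imports Defs
begin

lemma vec4_eq: "(x::real^4) = y \<longleftrightarrow> x$1 = y$1 \<and> x$2 = y$2 \<and> x$3 = y$3 \<and> x$4 = y$4"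
  by (simp add: vec_eq_iff forall_4)

lemma vec4_nth[simp]:
  "vector [a,b,c,d] $ (1::4) = a" "vector [a,b,c,d] $ (2::4) = b"
  "vector [a,b,c,d] $ (3::4) = c" "vector [a,b,c,d] $ (4::4) = d"
  by (simp_all add: vector_def)

theorem proposition2p6:
  fixes R P \<alpha> :: real
  assumes "R < 1" "2 * R > 1" "P < R" "0 < P" "\<alpha> > 0"
  defines "\<beta> \<equiv> - \<alpha> - 1 / R"
  defines "p0 \<equiv> vector [1, (2*R - 1) / (R * (\<alpha> + 1)), 1, (R - P) / (R * (\<alpha> + 1))] :: real^4"
  shows "memory_one p0 \<and>
    (\<exists>\<gamma>>0. PD_X p0 = \<gamma> *\<^sub>R (\<alpha> *\<^sub>R SX R P + \<beta> *\<^sub>R SY R P + one4) \<and>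
      (\<forall>p \<gamma>'. memory_one p \<and> \<gamma>' > 0 \<and>
          PD_X p = \<gamma>' *\<^sub>R (\<alpha> *\<^sub>R SX R P + \<beta> *\<^sub>R SY R P + one4)
        \<longrightarrow> \<gamma>' \<le> \<gamma> \<and> (\<gamma>' = \<gamma> \<longrightarrow> p = p0)))"
proof -
  have R0: "R > 0" using assms by linarith
  have a1: "\<alpha> + 1 > 0" using assms by linarith
  define v where "v = \<alpha> *\<^sub>R SX R P + \<beta> *\<^sub>R SY R P + one4"
  have v1: "v$1 = 0" and v2: "v$2 = 1 - \<alpha> - 1/R" and v3: "v$3 = \<alpha> + 1"
    and v4: "v$4 = 1 - P/R"
    using R0 by (simp_all add: v_def SX_def SY_def one4_def \<beta>_def field_simps)
  have P1: "\<And>q::real^4. PD_X q $1 = q$1 - 1" "\<And>q::real^4. PD_X q $2 = q$2 - 1"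
    "\<And>q::real^4. PD_X q $3 = q$3" "\<And>q::real^4. PD_X q $4 = q$4"
    by (simp_all add: PD_X_def)
  have p01: "p0$1 = 1" and p02: "p0$2 = (2*R - 1) / (R * (\<alpha> + 1))" and p03: "p0$3 = 1"
    and p04: "p0$4 = (R - P) / (R * (\<alpha> + 1))" by (simp_all add: p0_def)
  have m: "memory_one p0"
  proof -
    have "0 \<le> p0$2" using p02 assms R0 a1 by simp
    moreover have "p0$2 \<le> 1"
    proof -
      have "2*R - 1 \<le> R * (\<alpha> + 1)" using assms(1-5) R0 mult_pos_pos[OF R0 assms(5)] by (simp add: distrib_left del: mult_pos_pos; linarith)
      thus ?thesis using p02 R0 a1 by (simp add: divide_le_eq)
    qed
    moreover have "0 \<le> p0$4" using p04 assms R0 a1 by simp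
    moreover have "p0$4 \<le> 1"
    proof -
      have "R - P \<le> R * (\<alpha> + 1)" using assms(1-5) R0 mult_pos_pos[OF R0 assms(5)] by (simp add: distrib_left del: mult_pos_pos; linarith)
      thus ?thesis using p04 R0 a1 by (simp add: divide_le_eq)
    qed
    ultimately show ?thesis unfolding memory_one_def using p01 p03 by (simp add: forall_4)
  qed
  define g where "g = 1 / (\<alpha> + 1)"
  have g0: "g > 0" using a1 by (simp add: g_def)
  have eq0: "PD_X p0 = g *\<^sub>R v"
    unfolding vec4_eq using a1 R0 mult_pos_pos[OF R0 a1]
    by (simp add: P1 p01 p02 p03 p04 v1 v2 v3 v4 g_def field_simps)
  have rest: "\<forall>p \<gamma>'. memory_one p \<and> \<gamma>' > 0 \<and> PD_X p = \<gamma>' *\<^sub>R v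
        \<longrightarrow> \<gamma>' \<le> g \<and> (\<gamma>' = g \<longrightarrow> p = p0)"
  proof (intro allI impI)
    fix p :: "real^4" and \<gamma>' assume h: "memory_one p \<and> \<gamma>' > 0 \<and> PD_X p = \<gamma>' *\<^sub>R v"
    hence e: "PD_X p $ i = \<gamma>' * v $ i" for i by simp
    have "p$3 \<le> 1" using h unfolding memory_one_def by simp
    hence "\<gamma>' * (\<alpha> + 1) \<le> 1" using e[of 3] P1 v3 by simp
    hence le: "\<gamma>' \<le> g" using a1 by (simp add: g_def le_divide_eq)
    have "\<gamma>' = g \<longrightarrow> p = p0"
    proof
      assume "\<gamma>' = g"
      hence "PD_X p = PD_X p0" using h eq0 by simp
      thus "p = p0" by (simp add: PD_X_def)
    qed
    with le show "\<gamma>' \<le> g \<and> (\<gamma>' = g \<longrightarrow> p = p0)" by simp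
  qed
  show ?thesis using m g0 eq0 rest unfolding v_def by blast
qed

end
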